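(* Let $\alpha>1$ and let $B\subset\mathbb{H}$ be nonempty with $\hat B:=B\setminus\{x\in\mathbb{H}: x_2\le|x_1|^{1/\alpha}\}$ finite. Define $h_0=\max_{x\in\hat B}x_2$ if $\hat B\neq\emptyset$, and $h_0=\min\{h\in\mathbb{Z}_{\ge0}:\ B\cap([-\lceil h^\alpha\rceil,\lceil h^\alpha\rceil]\times[0,h])\neq\emptyset\}$ if $\hat B=\emptyset$. Let $l_{h_0}=\{(i,h_0):\ |i|\le\lfloor h_0^\alpha\rfloor\}$. Then there is a constant $c>0$ such that for all sufficiently large $N$, $$\sum_{w\in l_{h_0}}\bar{\mathcal H}_{B\cup l_{h_0},N}(w)\ge c.$$
   Context: $\mathbb{H}=\{(x_1,x_2)\in\mathbb{Z}^2:\ x_2\ge 0\}$ and $L_n=\{(x_1,n):x_1\in\mathbb{Z}\}$. $(S_n)_{n\ge0}$ is a simple random walk on $\mathbb{Z}^2$; $P_z$ denotes its law started at $z$. For $A\subset\mathbb{Z}^2$, $\bar\tau_A=\min\{n\ge0: S_n\in A\}$. For $A\subset\mathbb{H}$, $x\in A$ and $N\ge1$, define $$\bar{\mathcal H}_{A,N}(x)=\sum_{z\in L_N\setminus A}P_z\big(S_{\bar\tau_{A\cup L_0}}=x\big).$$ Integer intervals $[a,b]$ denote $\{a,a+1,\dots,b\}$. *)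

theory Defs
  imports "HOL-Analysis.Analysis"
begin

type_synonym pt = "int \<times> int"

definition UHP :: "pt set" where
  "UHP = {x. snd x \<ge> 0}"

definition line :: "int \<Rightarrow> pt set" where
  "line n = {x. snd x = n}"

definition SRW_steps :: "pt set" where
  "SRW_steps = {(1,0), (-1,0), (0,1), (0,-1)}"

definition walk_pos :: "pt \<Rightarrow> pt list \<Rightarrow> nat \<Rightarrow> pt" where
  "walk_pos z s k = z + sum_list (take k s)"

text \<open>P_z(S_{tau_A} = x), with tau_A = min{n \<ge> 0 : S_n \<in> A}: sum over all step
  sequences of length n (each of probability 4^-n) for which n is the first
  time the walk is in A and the walk is at x at that time.\<close>
definition hit_prob :: "pt set \<Rightarrow> pt \<Rightarrow> pt \<Rightarrow> real" where
  "hit_prob A z x =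
     (\<Sum>n. \<Sum>s\<in>{s. set s \<subseteq> SRW_steps \<and> length s = n}.
        if walk_pos z s n = x \<and> walk_pos z s n \<in> A \<and> (\<forall>k<n. walk_pos z s k \<notin> A)
        then (1/4::real) ^ n else 0)"

definition Hbar :: "pt set \<Rightarrow> nat \<Rightarrow> pt \<Rightarrow> real" where
  "Hbar A N x = infsum (\<lambda>z. hit_prob (A \<union> line 0) z x) (line (int N) - A)"

definition Bhat :: "real \<Rightarrow> pt set \<Rightarrow> pt set" where
  "Bhat \<alpha> B = B - {x \<in> UHP. real_of_int (snd x) \<le> \<bar>real_of_int (fst x)\<bar> powr (1/\<alpha>)}"

definition h0 :: "real \<Rightarrow> pt set \<Rightarrow> nat" where
  "h0 \<alpha> B = (if Bhat \<alpha> B \<noteq> {} then nat (Max (snd ` Bhat \<alpha> B))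
     else (LEAST h::nat. B \<inter> ({- \<lceil>real h powr \<alpha>\<rceil> .. \<lceil>real h powr \<alpha>\<rceil>} \<times> {0 .. int h}) \<noteq> {}))"

definition lseg :: "real \<Rightarrow> nat \<Rightarrow> pt set" where
  "lseg \<alpha> h = {(i, int h) | i. \<bar>i\<bar> \<le> \<lfloor>real h powr \<alpha>\<rfloor>}"

end

theory Submission
  imports Defs
begin


definition ind :: "pt set \<Rightarrow> (pt \<Rightarrow> real) \<Rightarrow> pt \<Rightarrow> real" where
  "ind D f y = (if y \<in> D then f y else 0)"

definition Kop :: "pt set \<Rightarrow> (pt \<Rightarrow> real) \<Rightarrow> pt \<Rightarrow> real" where
  "Kop D f x = (ind D f (x + (1,0)) + ind D f (x + (-1,0)) + ind D f (x + (0,1)) + ind D f (x + (0,-1))) / 4"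

lemma Kop_lin: "Kop D (\<lambda>y. a * f y + b * g y) x = a * Kop D f x + b * Kop D g x"
  by (simp add: Kop_def ind_def algebra_simps add_divide_distrib)

lemma Kop_diff: "Kop D (\<lambda>y. f y - c * g y) x = Kop D f x - c * Kop D g x"
  using Kop_lin[of D 1 f "-c" g x] by simp

lemma Kpow_lin: "(Kop D ^^ n) (\<lambda>y. a * f y + b * g y) = (\<lambda>x. a * (Kop D ^^ n) f x + b * (Kop D ^^ n) g x)"
proof (induction n)
  case 0 then show ?case by simp
next
  case (Suc n) then show ?case by (simp add: Kop_lin)
qed

lemma Kop_mono: "(\<And>y. y \<in> D \<Longrightarrow> f y \<le> g y) \<Longrightarrow> Kop D f x \<le> Kop D g x"
  unfolding Kop_def ind_def by (intro divide_right_mono add_mono) auto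

lemma Kpow_mono: "(\<And>y. y \<in> D \<Longrightarrow> f y \<le> g y) \<Longrightarrow> x \<in> D \<Longrightarrow> (Kop D ^^ n) f x \<le> (Kop D ^^ n) g x"
proof (induction n arbitrary: x)
  case 0 then show ?case by simp
next
  case (Suc n) then show ?case by (simp add: Kop_mono)
qed

lemma Kpow_mono_all: "(\<And>y. f y \<le> g y) \<Longrightarrow> (Kop D ^^ n) f x \<le> (Kop D ^^ n) g x"
proof (induction n arbitrary: x)
  case 0 then show ?case by simp
next
  case (Suc n) then show ?case by (simp add: Kop_mono)
qed

lemma Kop_nonneg: "(\<And>y. y \<in> D \<Longrightarrow> 0 \<le> f y) \<Longrightarrow> 0 \<le> Kop D f x"
  unfolding Kop_def ind_def by (intro divide_nonneg_pos add_nonneg_nonneg) auto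

lemma Kpow_nonneg: "(\<And>y. y \<in> D \<Longrightarrow> 0 \<le> f y) \<Longrightarrow> x \<in> D \<Longrightarrow> 0 \<le> (Kop D ^^ n) f x"
proof (induction n arbitrary: x)
  case 0 then show ?case by simp
next
  case (Suc n) then show ?case by (simp add: Kop_nonneg)
qed

lemma Kpow_nonneg_all: "(\<And>y. 0 \<le> f y) \<Longrightarrow> 0 \<le> (Kop D ^^ n) f x"
proof (induction n arbitrary: x)
  case 0 then show ?case by simp
next
  case (Suc n) then show ?case by (simp add: Kop_nonneg)
qed

lemma tele_step_ge:
  assumes A: "\<And>x. x \<in> D \<Longrightarrow> Kop D f x \<ge> f x - c * g x"
  shows "x \<in> D \<Longrightarrow> (Kop D ^^ Suc n) f x \<ge> (Kop D ^^ n) f x - c * (Kop D ^^ n) g x"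
proof (induction n arbitrary: x)
  case 0 then show ?case using A by simp
next
  case (Suc n)
  have "(Kop D ^^ Suc (Suc n)) f x = Kop D ((Kop D ^^ Suc n) f) x" by simp
  also have "\<dots> \<ge> Kop D (\<lambda>y. 1 * (Kop D ^^ n) f y + (-c) * (Kop D ^^ n) g y) x"
    using Suc.IH by (intro Kop_mono) auto
  finally show ?case by (simp add: Kop_diff)
qed

lemma tele_ge:
  assumes A: "\<And>x. x \<in> D \<Longrightarrow> Kop D f x \<ge> f x - c * g x" and x: "x \<in> D"
  shows "(Kop D ^^ M) f x \<ge> f x - c * (\<Sum>n<M. (Kop D ^^ n) g x)"
proof (induction M)
  case 0 then show ?case by simp
next
  case (Suc M)
  have "(Kop D ^^ Suc M) f x \<ge> (Kop D ^^ M) f x - c * (Kop D ^^ M) g x"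
    by (rule tele_step_ge[OF A x])
  with Suc show ?case by (simp add: algebra_simps)
qed

lemma tele_step_le:
  assumes A: "\<And>x. x \<in> D \<Longrightarrow> Kop D f x \<le> f x - c * g x"
  shows "x \<in> D \<Longrightarrow> (Kop D ^^ Suc n) f x \<le> (Kop D ^^ n) f x - c * (Kop D ^^ n) g x"
proof (induction n arbitrary: x)
  case 0 then show ?case using A by simp
next
  case (Suc n)
  have "(Kop D ^^ Suc (Suc n)) f x = Kop D ((Kop D ^^ Suc n) f) x" by simp
  also have "\<dots> \<le> Kop D (\<lambda>y. 1 * (Kop D ^^ n) f y + (-c) * (Kop D ^^ n) g y) x"
    using Suc.IH by (intro Kop_mono) auto
  finally show ?case by (simp add: Kop_diff)
qed

lemma tele_le_any:
  assumes A: "\<And>x. x \<in> D \<Longrightarrow> Kop D f x \<le> f x - c * g x"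
  shows "(Kop D ^^ Suc M) f x \<le> Kop D f x - c * (\<Sum>n<M. (Kop D ^^ Suc n) g x)"
proof (induction M)
  case 0 then show ?case by simp
next
  case (Suc M)
  have "(Kop D ^^ Suc (Suc M)) f x = Kop D ((Kop D ^^ Suc M) f) x" by simp
  also have "\<dots> \<le> Kop D (\<lambda>y. 1 * (Kop D ^^ M) f y + (-c) * (Kop D ^^ M) g y) x"
    using tele_step_le[OF A] by (intro Kop_mono) auto
  also have "\<dots> = (Kop D ^^ Suc M) f x - c * (Kop D ^^ Suc M) g x" by (simp add: Kop_diff)
  finally show ?case using Suc by (simp add: algebra_simps)
qed

definition l1 :: "pt \<Rightarrow> pt \<Rightarrow> int" where
  "l1 x y = \<bar>fst x - fst y\<bar> + \<bar>snd x - snd y\<bar>"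

lemma Kpow_local:
  assumes "\<And>y. (y \<in> D \<or> y = x) \<Longrightarrow> l1 x y \<le> int n \<Longrightarrow> f y = g y"
  shows "(Kop D ^^ n) f x = (Kop D ^^ n) g x"
  using assms
proof (induction n arbitrary: x)
  case 0 then show ?case by (simp add: l1_def)
next
  case (Suc n)
  have e: "ind D ((Kop D ^^ n) f) (x + d) = ind D ((Kop D ^^ n) g) (x + d)"
    if d: "l1 (x + d) x = 1" for d
  proof (cases "x + d \<in> D")
    case True
    have "(Kop D ^^ n) f (x + d) = (Kop D ^^ n) g (x + d)"
    proof (rule Suc.IH)
      fix y assume y: "y \<in> D \<or> y = x + d" "l1 (x + d) y \<le> int n"
      have "l1 x y \<le> l1 x (x + d) + l1 (x + d) y" by (simp add: l1_def)
      moreover have "l1 x (x + d) = 1" using d by (simp add: l1_def abs_minus_commute)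
      ultimately have "l1 x y \<le> int (Suc n)" using y by simp
      then show "f y = g y" using y True by (intro Suc.prems) auto
    qed
    then show ?thesis by (simp add: ind_def)
  qed (simp add: ind_def)
  have l: "l1 (x + (1,0)) x = 1" "l1 (x + (-1,0)) x = 1" "l1 (x + (0,1)) x = 1" "l1 (x + (0,-1)) x = 1"
    by (simp_all add: l1_def)
  show ?case unfolding funpow.simps comp_def Kop_def[of D "(Kop D ^^ n) f" x] Kop_def[of D "(Kop D ^^ n) g" x]
    using e[OF l(1)] e[OF l(2)] e[OF l(3)] e[OF l(4)] by simp
qed

lemma Kpow_column:
  assumes f: "\<And>y. y \<in> D \<Longrightarrow> 0 \<le> f y" and col: "\<And>i. 1 \<le> i \<Longrightarrow> i \<le> j \<Longrightarrow> x + (0, int i) \<in> D"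
  shows "(Kop D ^^ j) f x \<ge> (1/4)^j * f (x + (0, int j))"
  using col
proof (induction j arbitrary: x)
  case 0 then show ?case by (simp add: zero_prod_def[symmetric])
next
  case (Suc j)
  have up: "x + (0,1) \<in> D" using Suc.prems[of 1] by simp
  have IH: "(Kop D ^^ j) f (x + (0,1)) \<ge> (1/4)^j * f (x + (0,1) + (0, int j))"
  proof (rule Suc.IH)
    fix i assume "1 \<le> i" "i \<le> j"
    then show "x + (0, 1) + (0, int i) \<in> D" using Suc.prems[of "Suc i"] by (simp add: add.assoc)
  qed
  have nn: "0 \<le> ind D ((Kop D ^^ j) f) y" for y
    unfolding ind_def using Kpow_nonneg[OF f] by auto
  have "(Kop D ^^ Suc j) f x = Kop D ((Kop D ^^ j) f) x" by simp
  also have "\<dots> \<ge> ind D ((Kop D ^^ j) f) (x + (0,1)) / 4"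
    unfolding Kop_def[of D "(Kop D ^^ j) f" x] using nn[of "x + (1,0)"] nn[of "x + (-1,0)"] nn[of "x + (0,-1)"] by simp
  finally have "(Kop D ^^ Suc j) f x \<ge> (Kop D ^^ j) f (x + (0,1)) / 4" using up by (simp add: ind_def)
  moreover have eq: "x + (0,1) + (0, int j) = x + (0, int (Suc j))" by (simp add: add.assoc)
  moreover note IH[unfolded eq]
  moreover have "(1/4)^Suc j * f (x + (0, int (Suc j))) = (1/4) * ((1/4)^j * f (x + (0, int (Suc j))))"
    by simp
  ultimately show ?case by linarith
qed

lemma qpow_le1 [simp]: "(1/4::real)^n \<le> 1" by (rule power_le_one) auto
lemma qpow_le4 [simp]: "(1/4::real)^n \<le> 4" using qpow_le1[of n] by linarith

lemma Kpow_le1: "(Kop D ^^ n) (\<lambda>_. 1) x \<le> 1"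
proof (induction n arbitrary: x)
  case 0 then show ?case by simp
next
  case (Suc n)
  have o: "ind D ((Kop D ^^ n) (\<lambda>_. 1)) y \<le> 1" for y using Suc by (simp add: ind_def)
  show ?case unfolding funpow.simps comp_def Kop_def[of D "(Kop D ^^ n) (\<lambda>_. 1)" x]
    using o[of "x + (1,0)"] o[of "x + (-1,0)"] o[of "x + (0,1)"] o[of "x + (0,-1)"] by simp
qed

lemma surv1:
  assumes D: "\<And>y. y \<in> D \<Longrightarrow> 1 \<le> snd y"
  shows "snd x \<le> int n \<Longrightarrow> (Kop D ^^ Suc n) (\<lambda>_. 1) x \<le> 1 - (1/4)^Suc n"
proof (induction n arbitrary: x)
  case 0
  have d: "x + (0,-1) \<notin> D" using D[of "x + (0,-1)"] 0 by (cases x) auto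
  have "ind D (\<lambda>_. 1) y \<le> 1" for y by (simp add: ind_def)
  then show ?case using d unfolding funpow.simps comp_def Kop_def[of D "\<lambda>_. 1" x] id_def
    by (simp add: ind_def)
next
  case (Suc n)
  have d: "ind D ((Kop D ^^ Suc n) (\<lambda>_. 1)) (x + (0,-1)) \<le> 1 - (1/4)^Suc n"
  proof (cases "x + (0,-1) \<in> D")
    case True
    have "snd (x + (0,-1)) \<le> int n" using Suc.prems by (cases x) auto
    then show ?thesis using Suc.IH True by (simp add: ind_def)
  next
    case False then show ?thesis by (simp add: ind_def power_le_one)
  qed
  have o: "ind D ((Kop D ^^ Suc n) (\<lambda>_. 1)) y \<le> 1" for y
    using Kpow_le1[of "Suc n" D y] unfolding ind_def by (simp del: funpow.simps)
  have "(Kop D ^^ Suc (Suc n)) (\<lambda>_. 1) x = Kop D ((Kop D ^^ Suc n) (\<lambda>_. 1)) x" by simp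
  also have "\<dots> \<le> (3 + (1 - (1/4)^Suc n)) / 4"
    unfolding Kop_def[of D "(Kop D ^^ Suc n) (\<lambda>_. 1)" x]
    using o[of "x + (1,0)"] o[of "x + (-1,0)"] o[of "x + (0,1)"] d by simp
  also have "\<dots> = 1 - (1/4)^Suc (Suc n)" by simp
  finally show ?case .
qed

lemma surv:
  assumes D: "\<And>y. y \<in> D \<Longrightarrow> 1 \<le> snd y \<and> snd y \<le> int L" and x: "x \<in> D"
  shows "(Kop D ^^ (k * Suc L)) (\<lambda>_. 1) x \<le> (1 - (1/4)^Suc L)^k"
  using x
proof (induction k arbitrary: x)
  case 0 then show ?case by simp
next
  case (Suc k)
  define q :: real where "q = 1 - (1/4)^Suc L"
  have q0: "0 \<le> q" by (simp add: q_def power_le_one)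
  have e: "Suc k * Suc L = Suc L + k * Suc L" by simp
  have "(Kop D ^^ (Suc k * Suc L)) (\<lambda>_. 1) x = (Kop D ^^ Suc L) ((Kop D ^^ (k * Suc L)) (\<lambda>_. 1)) x"
    by (simp only: e funpow_add comp_def)
  also have "\<dots> \<le> (Kop D ^^ Suc L) (\<lambda>y. q^k * 1 + 0 * 1) x"
    using Suc by (intro Kpow_mono) (auto simp: q_def)
  also have "\<dots> = q^k * (Kop D ^^ Suc L) (\<lambda>_. 1) x + 0" by (subst Kpow_lin) simp
  also have "\<dots> \<le> q^k * q"
  proof -
    have "(Kop D ^^ Suc L) (\<lambda>_. 1) x \<le> q"
      using surv1[of D x L] D[OF Suc.prems] D by (auto simp: q_def)
    then show ?thesis using q0 by (simp add: mult_left_mono)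
  qed
  also have "q^k * q = q ^ Suc k" by (simp add: mult.commute)
  finally show ?case by (simp only: q_def)
qed

definition Ls :: "nat \<Rightarrow> pt list set" where
  "Ls n = {s. set s \<subseteq> SRW_steps \<and> length s = n}"

lemma fin_steps: "finite SRW_steps" by (simp add: SRW_steps_def)

lemma fin_Ls: "finite (Ls n)"
  unfolding Ls_def by (rule finite_lists_length_eq[OF fin_steps])

lemma Ls_Suc: "Ls (Suc n) = (\<lambda>(e,s). e # s) ` (SRW_steps \<times> Ls n)"
proof
  show "Ls (Suc n) \<subseteq> (\<lambda>(e,s). e # s) ` (SRW_steps \<times> Ls n)"
  proof
    fix s assume "s \<in> Ls (Suc n)"
    then obtain e s' where "s = e # s'" "length s' = n" "e \<in> SRW_steps" "set s' \<subseteq> SRW_steps"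
      unfolding Ls_def by (auto simp: length_Suc_conv)
    then show "s \<in> (\<lambda>(e,s). e # s) ` (SRW_steps \<times> Ls n)"
      by (auto simp: Ls_def image_iff intro!: bexI[of _ "(e,s')"])
  qed
qed (auto simp: Ls_def)

lemma sum_Ls_Suc: "(\<Sum>s\<in>Ls (Suc n). F s) = (\<Sum>e\<in>SRW_steps. \<Sum>s\<in>Ls n. F (e # s))"
proof -
  have inj: "inj_on (\<lambda>(e,s). e # s) (SRW_steps \<times> Ls n)" by (auto simp: inj_on_def)
  have "(\<Sum>s\<in>Ls (Suc n). F s) = (\<Sum>p\<in>SRW_steps \<times> Ls n. F ((\<lambda>(e,s). e # s) p))"
    unfolding Ls_Suc by (rule sum.reindex[OF inj, unfolded comp_def])
  also have "\<dots> = (\<Sum>e\<in>SRW_steps. \<Sum>s\<in>Ls n. F (e # s))"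
    by (simp add: sum.cartesian_product prod.case_distrib)
  finally show ?thesis .
qed

lemma sum_steps: "(\<Sum>e\<in>SRW_steps. G e) = G (1,0) + G (-1,0) + G (0,1) + G (0,-1)"
  by (simp add: SRW_steps_def add_ac)

lemma walk_pos_0 [simp]: "walk_pos w s 0 = w" by (simp add: walk_pos_def)
lemma walk_pos_Cons [simp]: "walk_pos w (e # s) (Suc j) = walk_pos (w + e) s j"
  by (simp add: walk_pos_def add.assoc)

definition Rsum :: "nat \<Rightarrow> pt set \<Rightarrow> pt \<Rightarrow> pt set \<Rightarrow> real" where
  "Rsum n D w F = (\<Sum>s\<in>Ls n. if (\<forall>j\<in>{1..n}. walk_pos w s j \<in> D) \<and> walk_pos w s n \<in> F then (1/4)^n else 0)"

lemma ball_Suc: "(\<forall>j\<in>{Suc 0..Suc n}. P j) = (P (Suc 0) \<and> (\<forall>j\<in>{Suc 0..n}. P (Suc j)))"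
  (is "?L = ?R")
proof
  assume ?L then show ?R by auto
next
  assume a: ?R
  show ?L
  proof
    fix j assume j: "j \<in> {Suc 0..Suc n}"
    show "P j"
    proof (cases "j = 1")
      case True then show ?thesis using a by simp
    next
      case False
      then obtain i where "j = Suc i" "i \<in> {Suc 0..n}" using j by (cases j) auto
      then show ?thesis using a by auto
    qed
  qed
qed

lemma Rsum_K: "Rsum n D w F = (Kop D ^^ n) (indicator F) w"
proof (induction n arbitrary: w)
  case 0
  have "Ls 0 = {[]}" by (auto simp: Ls_def)
  then show ?case by (simp add: Rsum_def indicator_def walk_pos_def)
next
  case (Suc n)
  have inner: "(\<Sum>s\<in>Ls n. if (\<forall>j\<in>{1..Suc n}. walk_pos w (e # s) j \<in> D) \<and> walk_pos w (e # s) (Suc n) \<in> F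
        then (1/4)^Suc n else 0) = ind D ((Kop D ^^ n) (indicator F)) (w + e) / 4" for e
  proof (cases "w + e \<in> D")
    case True
    have "(\<Sum>s\<in>Ls n. if (\<forall>j\<in>{1..Suc n}. walk_pos w (e # s) j \<in> D) \<and> walk_pos w (e # s) (Suc n) \<in> F
        then (1/4::real)^Suc n else 0) = (\<Sum>s\<in>Ls n. (1/4::real) * (if (\<forall>j\<in>{1..n}. walk_pos (w+e) s j \<in> D) \<and> walk_pos (w+e) s n \<in> F
        then (1/4)^n else 0))"
      using True by (intro sum.cong refl) (simp add: ball_Suc)
    also have "\<dots> = (1/4) * Rsum n D (w + e) F" by (simp add: Rsum_def sum_distrib_left)
    finally show ?thesis using True Suc.IH by (simp add: ind_def)
  next
    case False
    then show ?thesis by (simp add: ball_Suc ind_def)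
  qed
  have "Rsum (Suc n) D w F = (\<Sum>e\<in>SRW_steps. ind D ((Kop D ^^ n) (indicator F)) (w + e) / 4)"
    unfolding Rsum_def sum_Ls_Suc by (simp only: inner)
  also have "\<dots> = (Kop D ^^ Suc n) (indicator F) w"
    by (simp only: sum_steps funpow.simps comp_def Kop_def[of D "(Kop D ^^ n) (indicator F)" w]) (simp add: add_divide_distrib)
  finally show ?case .
qed

definition hterm :: "pt set \<Rightarrow> pt \<Rightarrow> pt \<Rightarrow> nat \<Rightarrow> real" where
  "hterm A z x n = (\<Sum>s\<in>Ls n. if walk_pos z s n = x \<and> walk_pos z s n \<in> A \<and> (\<forall>k<n. walk_pos z s k \<notin> A)
        then (1/4::real) ^ n else 0)"

lemma hit_prob_hterm: "hit_prob A z x = suminf (hterm A z x)"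
  unfolding hit_prob_def hterm_def Ls_def by simp

definition rv :: "pt list \<Rightarrow> pt list" where "rv s = rev (map uminus s)"

lemma sum_list_uminus: "sum_list (map uminus xs) = - sum_list (xs :: pt list)"
  by (induction xs) auto

lemma rv_rv [simp]: "rv (rv s) = s" by (simp add: rv_def rev_map comp_def)

lemma steps_uminus: "(a,b) \<in> SRW_steps \<Longrightarrow> (-a,-b) \<in> SRW_steps" by (auto simp: SRW_steps_def)

lemma rv_Ls: "s \<in> Ls n \<Longrightarrow> rv s \<in> Ls n"
  by (auto simp: rv_def Ls_def intro!: steps_uminus)

lemma walk_rv:
  assumes "length r = n" "k \<le> n"
  shows "walk_pos (x + sum_list r) (rv r) k = walk_pos x r (n - k)"
proof -
  have "take k (rv r) = rev (map uminus (drop (n - k) r))"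
    using assms by (simp add: rv_def take_rev drop_map)
  then have "sum_list (take k (rv r)) = - sum_list (drop (n - k) r)"
    by (simp add: sum_list_uminus)
  moreover have "sum_list r = sum_list (take (n-k) r) + sum_list (drop (n-k) r)"
    by (metis append_take_drop_id sum_list_append)
  ultimately show ?thesis by (simp add: walk_pos_def algebra_simps)
qed

lemma rev_sum:
  assumes F: "finite F" and FA: "F \<inter> A = {}" and xA: "x \<in> A"
  shows "(\<Sum>z\<in>F. hterm A z x n) = Rsum n (-A) x F"
proof -
  define P where "P z s = (if walk_pos z s n = x \<and> walk_pos z s n \<in> A \<and> (\<forall>k<n. walk_pos z s k \<notin> A)
        then (1/4::real) ^ n else 0)" for z s
  have "(\<Sum>z\<in>F. hterm A z x n) = (\<Sum>z\<in>F. \<Sum>r\<in>Ls n. P z (rv r))"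
  proof (intro sum.cong refl)
    fix z
    show "hterm A z x n = (\<Sum>r\<in>Ls n. P z (rv r))"
      unfolding hterm_def P_def[symmetric]
      by (rule sum.reindex_bij_witness[of _ rv rv]) (auto intro: rv_Ls)
  qed
  also have "\<dots> = (\<Sum>r\<in>Ls n. \<Sum>z\<in>F. P z (rv r))" by (rule sum.swap)
  also have "\<dots> = (\<Sum>r\<in>Ls n. if (\<forall>j\<in>{1..n}. walk_pos x r j \<in> -A) \<and> walk_pos x r n \<in> F then (1/4)^n else 0)"
  proof (intro sum.cong refl)
    fix r assume r: "r \<in> Ls n"
    have len: "length r = n" using r by (simp add: Ls_def)
    have lenr: "length (rv r) = n" using len by (simp add: rv_def)
    define z0 where "z0 = x + sum_list r"
    have P0: "P z (rv r) = 0" if "z \<noteq> z0" for z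
    proof -
      have "walk_pos z (rv r) n = z - sum_list r"
        using lenr by (simp add: walk_pos_def rv_def sum_list_uminus)
      then have "walk_pos z (rv r) n \<noteq> x" using that by (auto simp: z0_def algebra_simps)
      then show ?thesis by (simp add: P_def)
    qed
    have "(\<Sum>z\<in>F. P z (rv r)) = (\<Sum>z\<in>F. if z = z0 then P z (rv r) else 0)"
      using P0 by (intro sum.cong refl) auto
    also have "\<dots> = (if z0 \<in> F then P z0 (rv r) else 0)" using F by simp
    also have "\<dots> = (if (\<forall>j\<in>{1..n}. walk_pos x r j \<in> -A) \<and> walk_pos x r n \<in> F then (1/4)^n else 0)"
    proof -
      have wn: "walk_pos x r n = z0" using len by (simp add: walk_pos_def z0_def)
      have wz: "walk_pos z0 (rv r) n = x" using walk_rv[OF len, of n x] by (simp add: z0_def)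
      have "(\<forall>k<n. walk_pos z0 (rv r) k \<notin> A) = (\<forall>j\<in>{1..n}. walk_pos x r j \<in> -A)"
      proof
        assume a: "\<forall>k<n. walk_pos z0 (rv r) k \<notin> A"
        show "\<forall>j\<in>{1..n}. walk_pos x r j \<in> -A"
        proof
          fix j assume j: "j \<in> {1..n}"
          have "walk_pos z0 (rv r) (n - j) \<notin> A" using a j by auto
          moreover have "walk_pos z0 (rv r) (n - j) = walk_pos x r j"
            using walk_rv[OF len, of "n - j" x] j by (simp add: z0_def)
          ultimately show "walk_pos x r j \<in> -A" by simp
        qed
      next
        assume a: "\<forall>j\<in>{1..n}. walk_pos x r j \<in> -A"
        show "\<forall>k<n. walk_pos z0 (rv r) k \<notin> A"
        proof (intro allI impI)
          fix k assume k: "k < n"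
          have "walk_pos z0 (rv r) k = walk_pos x r (n - k)"
            using walk_rv[OF len, of k x] k by (simp add: z0_def)
          moreover have "n - k \<in> {1..n}" using k by auto
          ultimately show "walk_pos z0 (rv r) k \<notin> A" using a by auto
        qed
      qed
      then show ?thesis unfolding P_def wn wz using xA by auto
    qed
    finally show "(\<Sum>z\<in>F. P z (rv r)) = (if (\<forall>j\<in>{1..n}. walk_pos x r j \<in> -A) \<and> walk_pos x r n \<in> F then (1/4)^n else 0)" .
  qed
  also have "\<dots> = Rsum n (-A) x F" by (simp add: Rsum_def)
  finally show ?thesis .
qed

lemma hterm_nonneg: "0 \<le> hterm A z x n"
  unfolding hterm_def by (intro sum_nonneg) auto

lemma upper:
  assumes L0: "line 0 \<subseteq> Aa" and N: "0 < N" and xN: "snd x \<noteq> int N"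
  shows "(\<Sum>n<M. (Kop (-Aa) ^^ n) (indicator (line (int N))) x) \<le> 4 * real N"
proof -
  define D where "D = - Aa"
  define \<phi> where "\<phi> y = max 0 (min (real_of_int (snd y)) (real N))" for y :: pt
  define ch :: "pt \<Rightarrow> real" where "ch = indicator (line (int N))"
  have \<phi>0: "0 \<le> \<phi> y" for y by (simp add: \<phi>_def)
  have \<phi>N: "\<phi> y \<le> real N" for y by (simp add: \<phi>_def)
  have step: "Kop D \<phi> y \<le> \<phi> y - (1/4) * ch y" if y: "y \<in> D" for y
  proof -
    obtain a b where yab: "y = (a,b)" by fastforce
    have b0: "b \<noteq> 0"
    proof
      assume "b = 0" then have "y \<in> line 0" by (simp add: line_def yab)
      then show False using y L0 by (auto simp: D_def)
    qed
    have i: "ind D \<phi> z \<le> \<phi> z" for z using \<phi>0 by (simp add: ind_def)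
    have "Kop D \<phi> y \<le> (\<phi> (y + (1,0)) + \<phi> (y + (-1,0)) + \<phi> (y + (0,1)) + \<phi> (y + (0,-1))) / 4"
      unfolding Kop_def using i[of "y + (1,0)"] i[of "y + (-1,0)"] i[of "y + (0,1)"] i[of "y + (0,-1)"]
      by simp
    also have "\<dots> \<le> \<phi> y - (1/4) * ch y"
    proof -
      have e: "\<phi> (y + (1,0)) = \<phi> y" "\<phi> (y + (-1,0)) = \<phi> y"
        "\<phi> (y + (0,1)) = max 0 (min (real_of_int b + 1) (real N))"
        "\<phi> (y + (0,-1)) = max 0 (min (real_of_int b - 1) (real N))"
        "\<phi> y = max 0 (min (real_of_int b) (real N))"
        by (simp_all add: \<phi>_def yab)
      have c: "ch y = (if b = int N then 1 else 0)" by (simp add: ch_def line_def yab)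
      have "b < 0 \<or> (0 < b \<and> b < int N) \<or> b = int N \<or> int N < b" using b0 by linarith
      then have "max 0 (min (real_of_int b + 1) (real N)) + max 0 (min (real_of_int b - 1) (real N))
          \<le> 2 * max 0 (min (real_of_int b) (real N)) - (if b = int N then 1 else 0)"
      proof (elim disjE)
        assume "b < 0" then have "real_of_int b + 1 \<le> 0" by linarith
        then show ?thesis using \<open>b < 0\<close> by simp
      next
        assume a: "0 < b \<and> b < int N"
        then have "real_of_int b \<ge> 1" "real_of_int b + 1 \<le> real N" by linarith+
        then show ?thesis using a by simp
      next
        assume a: "b = int N" then show ?thesis using N by simp
      next
        assume a: "int N < b" then have "real_of_int b - 1 \<ge> real N" by linarith
        then show ?thesis using a by simp
      qed
      then show ?thesis unfolding e c by simp
    qed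
    finally show ?thesis .
  qed
  have T: "(Kop D ^^ Suc M') \<phi> x \<le> Kop D \<phi> x - (1/4) * (\<Sum>n<M'. (Kop D ^^ Suc n) ch x)" for M'
    by (rule tele_le_any) (use step in auto)
  have K1: "Kop D \<phi> x \<le> real N"
  proof -
    have "Kop D \<phi> x \<le> Kop D (\<lambda>_. real N) x" by (intro Kop_mono \<phi>N)
    also have "\<dots> \<le> real N" by (simp add: Kop_def ind_def)
    finally show ?thesis .
  qed
  have P: "0 \<le> (Kop D ^^ Suc M') \<phi> x" for M' by (intro Kpow_nonneg_all \<phi>0)
  show ?thesis
  proof (cases M)
    case 0 then show ?thesis by simp
  next
    case (Suc M')
    have "(\<Sum>n<M. (Kop D ^^ n) ch x) = ch x + (\<Sum>n<M'. (Kop D ^^ Suc n) ch x)"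
      unfolding Suc by (subst sum.lessThan_Suc_shift) simp
    also have "ch x = 0" using xN by (simp add: ch_def line_def)
    finally show ?thesis using T[of M'] K1 P[of M'] unfolding D_def ch_def by simp
  qed
qed

lemma Hbar_ge:
  assumes xA: "x \<in> A" and N: "0 < N" and xN: "snd x \<noteq> int N"
  shows "Hbar A N x \<ge> (\<Sum>n<M. (Kop (-(A \<union> line 0)) ^^ n)
            (indicator ((line (int N) - A) \<inter> {z. \<bar>fst z\<bar> \<le> int M})) x)"
proof -
  define A' where "A' = A \<union> line 0"
  define T where "T = line (int N) - A"
  define f where "f z = hit_prob A' z x" for z
  define K where "K = Kop (-A')"
  have xA': "x \<in> A'" using xA by (simp add: A'_def)
  have TA: "T \<inter> A' = {}" using N by (auto simp: T_def A'_def line_def)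
  have L0: "line 0 \<subseteq> A'" by (simp add: A'_def)
  have bnd: "(\<Sum>n<M'. \<Sum>z\<in>G. hterm A' z x n) \<le> 4 * real N" if G: "finite G" "G \<subseteq> T" for G M'
  proof -
    have GA: "G \<inter> A' = {}" using G(2) TA by blast
    have "(\<Sum>n<M'. \<Sum>z\<in>G. hterm A' z x n) = (\<Sum>n<M'. (K ^^ n) (indicator G) x)"
      by (intro sum.cong refl) (simp only: rev_sum[OF G(1) GA xA'] Rsum_K K_def)
    also have "\<dots> \<le> (\<Sum>n<M'. (K ^^ n) (indicator (line (int N))) x)"
      unfolding K_def using G(2) by (intro sum_mono Kpow_mono_all) (auto simp: indicator_def T_def)
    also have "\<dots> \<le> 4 * real N" unfolding K_def by (rule upper[OF L0 N xN])
    finally show ?thesis .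
  qed
  have summ: "summable (hterm A' z x)" if z: "z \<in> T" for z
  proof (rule summableI_nonneg_bounded)
    show "0 \<le> hterm A' z x n" for n by (rule hterm_nonneg)
    show "(\<Sum>i<n. hterm A' z x i) \<le> 4 * real N" for n using bnd[of "{z}" n] z by simp
  qed
  have f0: "0 \<le> f z" if "z \<in> T" for z
    unfolding f_def hit_prob_hterm using summ[OF that] by (intro suminf_nonneg hterm_nonneg)
  have fsum: "f summable_on T"
  proof (rule nonneg_bdd_above_summable_on)
    show "0 \<le> f z" if "z \<in> T" for z using f0 that .
    show "bdd_above (sum f ` {G. G \<subseteq> T \<and> finite G})"
    proof (rule bdd_aboveI)
      fix y assume "y \<in> sum f ` {G. G \<subseteq> T \<and> finite G}"
      then obtain G where G: "G \<subseteq> T" "finite G" "y = sum f G" by auto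
      have sG: "summable (hterm A' z x)" if "z \<in> G" for z using summ[of z] G(1) that by blast
      have "sum f G = (\<Sum>n. \<Sum>z\<in>G. hterm A' z x n)"
        unfolding f_def hit_prob_hterm by (rule suminf_sum[symmetric]) (use sG in auto)
      also have "\<dots> \<le> 4 * real N"
        by (rule suminf_le_const) (use sG bnd[OF G(2) G(1)] in \<open>auto intro: summable_sum\<close>)
      finally show "y \<le> 4 * real N" using G by simp
    qed
  qed
  define FM where "FM = (line (int N) - A) \<inter> {z. \<bar>fst z\<bar> \<le> int M}"
  have FMfin: "finite FM"
  proof -
    have "FM \<subseteq> (\<lambda>i. (i, int N)) ` {- int M .. int M}" by (auto simp: FM_def line_def image_iff)
    then show ?thesis by (rule finite_subset) simp
  qed
  have FMT: "FM \<subseteq> T" by (auto simp: FM_def T_def)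
  have FMA: "FM \<inter> A' = {}" using FMT TA by blast
  have "(\<Sum>n<M. (K ^^ n) (indicator FM) x) = (\<Sum>n<M. \<Sum>z\<in>FM. hterm A' z x n)"
    by (intro sum.cong refl) (simp only: rev_sum[OF FMfin FMA xA'] Rsum_K K_def)
  also have "\<dots> = (\<Sum>z\<in>FM. \<Sum>n<M. hterm A' z x n)" by (rule sum.swap)
  also have "\<dots> \<le> (\<Sum>z\<in>FM. f z)"
  proof (rule sum_mono)
    fix z assume z: "z \<in> FM"
    show "(\<Sum>n<M. hterm A' z x n) \<le> f z"
      unfolding f_def hit_prob_hterm
      by (intro sum_le_suminf summ) (use z FMT in \<open>auto intro: hterm_nonneg\<close>)
  qed
  also have "\<dots> = infsum f FM" using FMfin by simp
  also have "\<dots> \<le> infsum f T"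
  proof (rule infsum_mono_neutral)
    show "f summable_on FM" using FMfin by simp
    show "f summable_on T" by (rule fsum)
  qed (use FMT f0 in auto)
  also have "infsum f T = Hbar A N x" by (simp add: Hbar_def f_def[abs_def] A'_def T_def)
  finally show ?thesis by (simp add: K_def A'_def FM_def)
qed



definition fd :: "real \<Rightarrow> nat \<Rightarrow> complex \<Rightarrow> complex" where
  "fd \<beta> i z = of_real (\<Prod>k<i. (\<beta> - real k)) * z powr (of_real (\<beta> - real i))"

lemma fd_deriv:
  assumes "0 < Re z"
  shows "(fd \<beta> i has_field_derivative fd \<beta> (Suc i) z) (at z)"
proof -
  have nz: "z \<notin> \<real>\<^sub>\<le>\<^sub>0" using assms by (auto simp: nonpos_Reals_def complex_nonpos_Reals_iff)
  have "((\<lambda>z. z powr (of_real (\<beta> - real i))) has_field_derivative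
      (of_real (\<beta> - real i) * z powr (of_real (\<beta> - real i) - 1))) (at z)"
    by (rule has_field_derivative_powr[OF nz])
  then have "(fd \<beta> i has_field_derivative of_real (\<Prod>k<i. (\<beta> - real k)) *
      (of_real (\<beta> - real i) * z powr (of_real (\<beta> - real i) - 1))) (at z)"
    unfolding fd_def by (rule DERIV_cmult)
  moreover have "of_real (\<Prod>k<i. (\<beta> - real k)) *
      (of_real (\<beta> - real i) * z powr (of_real (\<beta> - real i) - 1)) = fd \<beta> (Suc i) z"
    by (simp add: fd_def algebra_simps)
  ultimately show ?thesis by simp
qed

lemma lap_powr:
  fixes \<beta> :: real and W :: complex
  assumes b0: "0 < \<beta>" and b1: "\<beta> < 1" and W3: "3 \<le> Re W"
  shows "cmod ((W+1) powr \<beta> + (W-1) powr \<beta> + (W+\<i>) powr \<beta> + (W-\<i>) powr \<beta> - 4 * W powr \<beta>)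
     \<le> 4 / (Re W - 1)^3"
proof -
  define S where "S = cball W 1"
  define B where "B = 6 / (Re W - 1)^3"
  have ReS: "Re z \<ge> Re W - 1" if "z \<in> S" for z
  proof -
    have "\<bar>Re (W - z)\<bar> \<le> cmod (W - z)" by (rule abs_Re_le_cmod)
    also have "\<dots> \<le> 1" using that by (simp add: S_def dist_norm)
    finally show ?thesis by simp
  qed
  have der: "(fd \<beta> i has_field_derivative fd \<beta> (Suc i) x) (at x within S)" if "x \<in> S" for i x
    using fd_deriv[of x \<beta> i] ReS[OF that] W3 by (auto intro: has_field_derivative_at_within)
  have bnd: "cmod (fd \<beta> (Suc 3) x) \<le> B" if "x \<in> S" for x
  proof -
    have Rx: "Re x \<ge> 2" using ReS[OF that] W3 by simp
    have nx: "cmod x \<ge> Re W - 1" using ReS[OF that] complex_Re_le_cmod[of x] by linarith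
    have nx1: "cmod x \<ge> 1" using nx W3 by linarith
    have p: "\<bar>\<Prod>k<Suc 3. (\<beta> - real k)\<bar> \<le> 6"
    proof -
      have e: "(\<Prod>k<Suc 3. (\<beta> - real k)) = \<beta> * (\<beta> - 1) * (\<beta> - 2) * (\<beta> - 3)"
        by (simp add: lessThan_Suc eval_nat_numeral algebra_simps)
      have "\<bar>\<Prod>k<Suc 3. (\<beta> - real k)\<bar> = \<bar>\<beta>\<bar> * \<bar>\<beta> - 1\<bar> * \<bar>\<beta> - 2\<bar> * \<bar>\<beta> - 3\<bar>"
        unfolding e by (simp add: abs_mult)
      also have "\<dots> \<le> 1 * 1 * 2 * 3"
        using b0 b1 by (intro mult_mono) auto
      finally show ?thesis by simp
    qed
    have "cmod (x powr (of_real (\<beta> - real (Suc 3)))) = cmod x powr (\<beta> - 4)"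
      by (subst norm_powr_real_powr') auto
    also have "\<dots> \<le> cmod x powr (-3)"
      using nx1 b1 by (intro powr_mono) auto
    also have "\<dots> = 1 / cmod x ^ 3"
      using nx1 by (simp add: powr_minus_divide powr_realpow)
    also have "\<dots> \<le> 1 / (Re W - 1)^3"
      using nx W3 by (intro divide_left_mono power_mono mult_pos_pos zero_less_power) auto
    finally have q: "cmod (x powr (of_real (\<beta> - real (Suc 3)))) \<le> 1 / (Re W - 1)^3" .
    have "cmod (fd \<beta> (Suc 3) x) = \<bar>\<Prod>k<Suc 3. (\<beta> - real k)\<bar> * cmod (x powr (of_real (\<beta> - real (Suc 3))))"
      by (simp only: fd_def norm_mult norm_of_real)
    also have "\<dots> \<le> 6 * (1 / (Re W - 1)^3)"
      by (intro mult_mono p q) auto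
    finally show ?thesis by (simp add: B_def)
  qed
  have T: "cmod (fd \<beta> 0 (W+h) - (\<Sum>i\<le>3. fd \<beta> i W * h ^ i / fact i)) \<le> B / 6"
    if "cmod h = 1" for h
  proof -
    have "W + h \<in> S" using that by (simp add: S_def dist_norm)
    moreover have "W \<in> S" by (simp add: S_def)
    ultimately have "cmod (fd \<beta> 0 (W+h) - (\<Sum>i\<le>3. fd \<beta> i W * ((W+h) - W) ^ i / fact i))
        \<le> B * cmod ((W+h) - W)^(Suc 3) / fact 3"
      by (intro complex_Taylor[where f="fd \<beta>" and S=S] der bnd) (auto simp: S_def)
    then show ?thesis using that by (simp add: fact_numeral)
  qed
  define T where "T h = (\<Sum>i\<le>3. fd \<beta> i W * h ^ i / fact i)" for h
  have sumT: "T 1 + T (-1) + T \<i> + T (-\<i>) = 4 * fd \<beta> 0 W"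
    by (simp add: T_def eval_nat_numeral atMost_Suc algebra_simps)
  have f0: "fd \<beta> 0 z = z powr \<beta>" for z by (simp add: fd_def)
  have "(W+1) powr \<beta> + (W-1) powr \<beta> + (W+\<i>) powr \<beta> + (W-\<i>) powr \<beta> - 4 * W powr \<beta>
     = (fd \<beta> 0 (W+1) - T 1) + (fd \<beta> 0 (W+(-1)) - T (-1)) + (fd \<beta> 0 (W+\<i>) - T \<i>) + (fd \<beta> 0 (W+(-\<i>)) - T (-\<i>))"
    using sumT by (simp add: f0 algebra_simps)
  also have "cmod \<dots> \<le> B/6 + B/6 + B/6 + B/6"
    using T[of 1] T[of "-1"] T[of "\<i>"] T[of "-\<i>"] unfolding T_def[symmetric]
    by (intro norm_triangle_le add_mono) auto
  finally show ?thesis by (simp add: B_def)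
qed


definition gW :: "real \<Rightarrow> pt \<Rightarrow> complex" where
  "gW S x = Complex (real_of_int (snd x) + S) (- real_of_int (fst x))"

definition gf :: "real \<Rightarrow> real \<Rightarrow> real \<Rightarrow> real \<Rightarrow> pt \<Rightarrow> real" where
  "gf \<beta> C K S x = C * Re (gW S x powr complex_of_real \<beta>) - K / (real_of_int (snd x) + S)"

lemma Re_powr_lower:
  fixes z :: complex
  assumes z: "0 < Re z" and b0: "0 < \<beta>" and b1: "\<beta> < 1"
  shows "Re (z powr complex_of_real \<beta>) \<ge> cmod z powr \<beta> * cos (\<beta> * pi / 2)"
proof -
  have z0: "z \<noteq> 0" using z by auto
  have nz: "cmod z > 0" using z0 by simp
  have im: "\<bar>Im (Ln z)\<bar> < pi/2" using Re_Ln_pos_lt_imp[OF z] .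
  have e: "z powr complex_of_real \<beta> = exp (complex_of_real \<beta> * Ln z)"
    using z0 by (simp add: powr_def)
  have "Re (z powr complex_of_real \<beta>) = exp (\<beta> * ln (cmod z)) * cos (\<beta> * Im (Ln z))"
    unfolding e using z0 by (simp add: Re_exp Im_exp Re_Ln)
  also have "exp (\<beta> * ln (cmod z)) = cmod z powr \<beta>"
    using nz by (simp add: powr_def mult.commute)
  also have "cos (\<beta> * Im (Ln z)) \<ge> cos (\<beta> * pi / 2)"
  proof -
    have "cos (\<beta> * Im (Ln z)) = cos \<bar>\<beta> * Im (Ln z)\<bar>" by simp
    also have "\<dots> \<ge> cos (\<beta> * pi / 2)"
    proof (rule cos_monotone_0_pi_le)
      show "0 \<le> \<bar>\<beta> * Im (Ln z)\<bar>" by simp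
      have "\<bar>\<beta> * Im (Ln z)\<bar> = \<beta> * \<bar>Im (Ln z)\<bar>" using b0 by (simp add: abs_mult)
      also have "\<dots> \<le> \<beta> * (pi/2)" using im b0 by (intro mult_left_mono) auto
      finally show "\<bar>\<beta> * Im (Ln z)\<bar> \<le> \<beta> * pi / 2" by simp
      show "\<beta> * pi / 2 \<le> pi" using b0 b1 pi_gt_zero by (simp add: field_simps)
    qed
    finally show ?thesis .
  qed
  then have "cmod z powr \<beta> * cos (\<beta> * Im (Ln z)) \<ge> cmod z powr \<beta> * cos (\<beta> * pi / 2)"
    by (intro mult_left_mono) auto
  finally show ?thesis .
qed

lemma gf_lap:
  assumes b0: "0 < \<beta>" and b1: "\<beta> < 1" and C0: "0 \<le> C" and K: "16 * C \<le> K"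
    and S3: "3 \<le> S" and x2: "0 \<le> snd x"
  shows "gf \<beta> C K S (x + (1,0)) + gf \<beta> C K S (x + (-1,0)) + gf \<beta> C K S (x + (0,1))
       + gf \<beta> C K S (x + (0,-1)) \<le> 4 * gf \<beta> C K S x"
proof -
  obtain a b where x: "x = (a,b)" by fastforce
  define t where "t = real_of_int b + S"
  define W where "W = gW S x"
  have t3: "t \<ge> 3" using x2 S3 by (simp add: t_def x)
  have ReW: "Re W = t" by (simp add: W_def gW_def t_def x)
  have W1: "gW S (x + (1,0)) = W - \<i>" "gW S (x + (-1,0)) = W + \<i>"
     "gW S (x + (0,1)) = W + 1" "gW S (x + (0,-1)) = W - 1"
    by (simp_all add: W_def gW_def x complex_eq_iff)
  have t1: "real_of_int (snd (x + (0,1))) + S = t + 1" "real_of_int (snd (x + (0,-1))) + S = t - 1"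
    "real_of_int (snd (x + (1,0))) + S = t" "real_of_int (snd (x + (-1,0))) + S = t"
    "real_of_int (snd x) + S = t"
    by (simp_all add: x t_def)
  have L: "cmod ((W+1) powr \<beta> + (W-1) powr \<beta> + (W+\<i>) powr \<beta> + (W-\<i>) powr \<beta> - 4 * W powr \<beta>)
     \<le> 4 / (t - 1)^3" using lap_powr[OF b0 b1, of W] ReW t3 by simp
  have LR: "Re ((W+1) powr \<beta>) + Re ((W-1) powr \<beta>) + Re ((W+\<i>) powr \<beta>) + Re ((W-\<i>) powr \<beta>) - 4 * Re (W powr \<beta>)
     \<le> 4 / (t - 1)^3"
    using complex_Re_le_cmod[of "(W+1) powr \<beta> + (W-1) powr \<beta> + (W+\<i>) powr \<beta> + (W-\<i>) powr \<beta> - 4 * W powr \<beta>"] L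
    by simp
  have c1: "(t - 1)^3 \<ge> t^3 / 8"
  proof -
    have "t/2 \<le> t - 1" using t3 by simp
    then have "(t/2)^3 \<le> (t-1)^3" using t3 by (intro power_mono) auto
    then show ?thesis by (simp add: power_divide)
  qed
  have c2: "4 / (t - 1)^3 \<le> 32 / t^3"
  proof -
    have "4 / (t - 1)^3 \<le> 4 / (t^3/8)" using c1 t3 by (intro divide_left_mono) auto
    then show ?thesis by simp
  qed
  have tt: "t - 1 \<noteq> 0" "t + 1 \<noteq> 0" "t \<noteq> 0" using t3 by auto
  have c3: "1/(t+1) + 1/(t-1) - 2/t = 2 / (t * (t - 1) * (t + 1))"
  proof -
    have "1/(t+1) + 1/(t-1) - 2/t = (t*(t-1) + t*(t+1) - 2*(t-1)*(t+1)) / (t * (t - 1) * (t + 1))"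
      using tt by (simp add: divide_simps) (simp add: algebra_simps)
    also have "t*(t-1) + t*(t+1) - 2*(t-1)*(t+1) = 2" by (simp add: algebra_simps)
    finally show ?thesis .
  qed
  have c4: "2 / (t * (t - 1) * (t + 1)) \<ge> 2 / t^3"
  proof -
    have "3 * 1 \<le> t * t" using t3 by (intro mult_mono) auto
    then have "1 < t * t" by linarith
    then show ?thesis
    using t3 by (intro divide_left_mono) (auto simp: power3_eq_cube algebra_simps)
  qed
  have "C * (4 / (t - 1)^3) \<le> C * (32 / t^3)" using c2 C0 by (intro mult_left_mono) auto
  also have "\<dots> \<le> K * (2 / t^3)" using K t3 by (simp add: field_simps)
  also have "\<dots> \<le> K * (1/(t+1) + 1/(t-1) - 2/t)" using c3 c4 K C0 by (intro mult_left_mono) auto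
  finally have key: "C * (4 / (t - 1)^3) \<le> K * (1/(t+1) + 1/(t-1) - 2/t)" .
  have "C * (Re ((W+1) powr \<beta>) + Re ((W-1) powr \<beta>) + Re ((W+\<i>) powr \<beta>) + Re ((W-\<i>) powr \<beta>) - 4 * Re (W powr \<beta>))
     \<le> C * (4 / (t - 1)^3)" using LR C0 by (intro mult_left_mono) auto
  with key show ?thesis
    unfolding gf_def W1 t1 W_def[symmetric] by (simp add: algebra_simps add_divide_distrib)
qed

lemma gf_lower:
  assumes b0: "0 < \<beta>" and b1: "\<beta> < 1" and C: "C * cos (\<beta> * pi / 2) = 2" and C0: "0 \<le> C"
    and K0: "0 \<le> K" and SK: "K \<le> S" and S3: "3 \<le> S" and x2: "0 \<le> snd x"
  shows "gf \<beta> C K S x \<ge> cmod (gW S x) powr \<beta>"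
proof -
  define W where "W = gW S x"
  define t where "t = real_of_int (snd x) + S"
  have ReW: "Re W = t" by (simp add: W_def gW_def t_def)
  have tS: "t \<ge> S" using x2 by (simp add: t_def)
  have nW: "cmod W \<ge> 1" using complex_Re_le_cmod[of W] ReW tS S3 by linarith
  have p1: "cmod W powr \<beta> \<ge> 1" using nW b0 by (simp add: ge_one_powr_ge_zero)
  have "Re (W powr complex_of_real \<beta>) \<ge> cmod W powr \<beta> * cos (\<beta> * pi / 2)"
    using Re_powr_lower[of W \<beta>] ReW tS S3 b0 b1 by simp
  then have "C * Re (W powr complex_of_real \<beta>) \<ge> C * (cmod W powr \<beta> * cos (\<beta> * pi / 2))"
    using C0 by (intro mult_left_mono) auto
  also have "C * (cmod W powr \<beta> * cos (\<beta> * pi / 2)) = 2 * cmod W powr \<beta>" using C by (simp add: algebra_simps)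
  finally have A: "C * Re (W powr complex_of_real \<beta>) \<ge> 2 * cmod W powr \<beta>" .
  have "K / t \<le> 1" using SK tS S3 K0 by (simp add: divide_le_eq)
  then show ?thesis using A p1 unfolding gf_def W_def[symmetric] t_def[symmetric] by linarith
qed

lemma gf_upper:
  assumes "0 \<le> K" "0 \<le> C" "0 \<le> S"
  shows "gf \<beta> C K S (0, int m) \<le> C * (real m + S) powr \<beta>"
proof -
  have W: "gW S (0, int m) = complex_of_real (real m + S)" by (simp add: gW_def complex_eq_iff)
  have "Re (gW S (0, int m) powr complex_of_real \<beta>) \<le> cmod (gW S (0, int m) powr complex_of_real \<beta>)"
    by (rule complex_Re_le_cmod)
  also have "\<dots> = (real m + S) powr \<beta>" unfolding W using assms
    by (subst norm_powr_real_powr) auto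
  finally have "C * Re (gW S (0, int m) powr complex_of_real \<beta>) \<le> C * (real m + S) powr \<beta>"
    using assms by (intro mult_left_mono) auto
  moreover have "K / (real_of_int (snd (0::int, int m)) + S) \<ge> 0" using assms by simp
  ultimately show ?thesis unfolding gf_def by linarith
qed

lemma exists_m:
  fixes C S :: real and h :: nat
  assumes b0: "0 < \<beta>" and b1: "\<beta> < 1" and C0: "0 \<le> C" and S0: "0 \<le> S"
  shows "\<exists>m::nat. h < m \<and> C * (real m + S) powr \<beta> + real h + 1 \<le> real m"
proof -
  define m where "m = nat \<lceil>max (max S (2 * (real h + 1))) ((4*C + 1) powr (1/(1-\<beta>)))\<rceil> + 1"
  define y where "y = max (max S (2 * (real h + 1))) ((4*C + 1) powr (1/(1-\<beta>)))"
  have "y \<le> real (nat \<lceil>y\<rceil>)" by (rule real_nat_ceiling_ge)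
  then have my: "real m \<ge> y" unfolding m_def y_def[symmetric] by simp
  have mS: "real m \<ge> S" and mh: "real m \<ge> 2 * (real h + 1)"
    and mC: "real m \<ge> (4*C + 1) powr (1/(1-\<beta>))" using my unfolding y_def by auto
  have m1: "real m \<ge> 1" unfolding m_def by simp
  have "real m powr (1 - \<beta>) \<ge> ((4*C + 1) powr (1/(1-\<beta>))) powr (1 - \<beta>)"
    using mC b1 by (intro powr_mono2) auto
  also have "((4*C + 1) powr (1/(1-\<beta>))) powr (1 - \<beta>) = 4*C + 1"
    using b1 C0 by (simp add: powr_powr)
  finally have mp: "real m powr (1 - \<beta>) \<ge> 4 * C + 1" .
  have "(real m + S) powr \<beta> \<le> (2 * real m) powr \<beta>" using mS S0 b0 by (intro powr_mono2) auto
  also have "\<dots> = 2 powr \<beta> * real m powr \<beta>" by (simp add: powr_mult)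
  also have "\<dots> \<le> 2 * real m powr \<beta>"
  proof -
    have "2 powr \<beta> \<le> 2 powr 1" using b1 by (intro powr_mono) auto
    then show ?thesis by (intro mult_right_mono) auto
  qed
  finally have A: "C * (real m + S) powr \<beta> \<le> C * (2 * real m powr \<beta>)" using C0 by (intro mult_left_mono)
  have "4 * C * real m powr \<beta> \<le> real m powr (1 - \<beta>) * real m powr \<beta>"
    using mp C0 by (intro mult_right_mono) auto
  also have "\<dots> = real m" using m1 by (simp add: powr_add[symmetric])
  finally have B: "4 * C * real m powr \<beta> \<le> real m" .
  have "real h < real m" using mh by (simp add: of_nat_le_iff)
  then have "h < m" by simp
  moreover
  { define Q where "Q = C * real m powr \<beta>"
    have A': "C * (real m + S) powr \<beta> \<le> 2 * Q" using A by (simp add: Q_def)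
    have B': "4 * Q \<le> real m" using B by (simp add: Q_def)
    have "C * (real m + S) powr \<beta> + real h + 1 \<le> real m" using A' B' mh by (smt (verit)) }
  ultimately show ?thesis by blast
qed



lemma Kop_mono_D:
  assumes "D' \<subseteq> D" "\<And>y. y \<in> D \<Longrightarrow> 0 \<le> g y" "\<And>y. y \<in> D' \<Longrightarrow> g' y \<le> g y"
  shows "Kop D' g' x \<le> Kop D g x"
proof -
  have "ind D' g' y \<le> ind D g y" for y using assms by (auto simp: ind_def)
  then show ?thesis unfolding Kop_def by (intro divide_right_mono add_mono) auto
qed

lemma Kpow_mono_D:
  assumes "D' \<subseteq> D" "\<And>y. 0 \<le> f y"
  shows "(Kop D' ^^ n) f x \<le> (Kop D ^^ n) f x"
proof (induction n arbitrary: x)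
  case 0 then show ?case by simp
next
  case (Suc n)
  have "Kop D' ((Kop D' ^^ n) f) x \<le> Kop D ((Kop D ^^ n) f) x"
    by (rule Kop_mono_D[OF assms(1)]) (auto intro: Kpow_nonneg_all assms(2) Suc)
  then show ?case by simp
qed

lemma shift_sum_le:
  fixes M j :: nat
  assumes "\<And>n. 0 \<le> g n"
  shows "(\<Sum>n<M. g (n + j)) \<le> (\<Sum>n<M + j. (g n :: real))"
proof (induction M)
  case 0 then show ?case using assms by (simp add: sum_nonneg)
next
  case (Suc M) then show ?case by (simp add: add.commute)
qed

lemma rho_diff:
  fixes b :: int and N :: nat
  assumes "1 \<le> b" "b \<le> 2 * int N - 1"
  shows "min (real_of_int (b+1)) (2 * real N - real_of_int (b+1)) + min (real_of_int (b-1)) (2 * real N - real_of_int (b-1))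
     \<ge> 2 * min (real_of_int b) (2 * real N - real_of_int b) - 2 * (if b = int N then 1 else 0)"
proof -
  have "b < int N \<or> b = int N \<or> int N < b" by linarith
  then show ?thesis
  proof (elim disjE)
    assume "b < int N" then have "real_of_int b + 1 \<le> real N" by linarith
    then show ?thesis using \<open>b < int N\<close> by simp
  next
    assume "b = int N" then show ?thesis by simp
  next
    assume "int N < b" then have "real_of_int b - 1 \<ge> real N" by linarith
    then show ?thesis using \<open>int N < b\<close> by simp
  qed
qed

lemma core:
  fixes \<alpha> \<beta> C K S :: real and h m N :: nat
  assumes a1: "\<alpha> > 1" and b1: "1/\<alpha> < \<beta>" and b2: "\<beta> < 1" and Ccb: "C * cos (\<beta>*pi/2) = 2"
    and C0: "0 \<le> C" and K1: "16*C \<le> K" and K2: "K \<le> S" and S3: "3 \<le> S" and K0: "0 \<le> K"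
    and hm: "h < m" and mN: "m \<le> N"
    and mC: "C*(real m + S) powr \<beta> + real h + 1 \<le> real m"
  defines "Dp \<equiv> {x. int h < snd x \<and> snd x < 2*int N \<and> \<not> (real_of_int (snd x) \<le> \<bar>real_of_int (fst x)\<bar> powr (1/\<alpha>))}"
  shows "\<exists>M. (\<Sum>n<M. (Kop Dp ^^ n) (indicator (line (int N))) (0, int m)) \<ge> 1"
proof -
  define g where "g = gf \<beta> C K S"
  define \<rho> where "\<rho> t = min (real_of_int t) (2 * real N - real_of_int t)" for t
  define \<Phi> where "\<Phi> y = \<rho> (snd y) - real h - g y" for y
  define ch :: "pt \<Rightarrow> real" where "ch = indicator (line (int N))"
  define u where "u = (0::int, int m)"
  have g0: "0 < 1/\<alpha>" using a1 by simp
  have b0: "0 < \<beta>" using g0 b1 by linarith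
  have glow: "g y \<ge> cmod (gW S y) powr \<beta>" if "0 \<le> snd y" for y
    unfolding g_def by (rule gf_lower[OF b0 b2 Ccb C0 K0 K2 S3 that])
  have gnn: "g y \<ge> 0" if "0 \<le> snd y" for y using glow[OF that] by (meson order.trans powr_ge_zero)
  have bdry: "\<Phi> y \<le> 0" if x: "x \<in> Dp" and y: "y \<notin> Dp" and yx: "l1 y x = 1" for x y
  proof -
    have xs: "int h < snd x" "snd x < 2 * int N" using x by (auto simp: Dp_def)
    have ys: "snd x - 1 \<le> snd y" "snd y \<le> snd x + 1" using yx by (auto simp: l1_def)
    have y0: "0 \<le> snd y" using xs ys by linarith
    have rle: "\<rho> t \<le> real_of_int t" for t by (simp add: \<rho>_def)
    consider "snd y = int h" | "snd y = 2 * int N" | "int h < snd y \<and> snd y < 2*int N \<and> real_of_int (snd y) \<le> \<bar>real_of_int (fst y)\<bar> powr (1/\<alpha>)"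
    proof -
      have n: "\<not> (int h < snd y \<and> snd y < 2 * int N \<and> \<not> (real_of_int (snd y) \<le> \<bar>real_of_int (fst y)\<bar> powr (1/\<alpha>)))"
        using y by (simp add: Dp_def)
      assume c1: "snd y = int h \<Longrightarrow> thesis" and c2: "snd y = 2 * int N \<Longrightarrow> thesis"
        and c3: "int h < snd y \<and> snd y < 2*int N \<and> real_of_int (snd y) \<le> \<bar>real_of_int (fst y)\<bar> powr (1/\<alpha>) \<Longrightarrow> thesis"
      show thesis
      proof (cases "snd y = int h \<or> snd y = 2 * int N")
        case True then show ?thesis using c1 c2 by blast
      next
        case False
        then have "int h < snd y \<and> snd y < 2*int N" using xs ys by linarith
        then show ?thesis using n c3 by blast
      qed
    qed
    then show ?thesis
    proof cases
      case 1
      have "\<rho> (snd y) = real h" using 1 hm mN by (simp add: \<rho>_def)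
      then show ?thesis using gnn[OF y0] by (simp add: \<Phi>_def)
    next
      case 2
      have "\<rho> (snd y) = 0" using 2 by (simp add: \<rho>_def)
      then show ?thesis using gnn[OF y0] by (simp add: \<Phi>_def)
    next
      case 3
      have s1: "real_of_int (snd y) \<ge> 1" using 3 by linarith
      have f1: "\<bar>real_of_int (fst y)\<bar> \<ge> 1"
      proof (rule ccontr)
        assume "\<not> ?thesis"
        then have "\<bar>real_of_int (fst y)\<bar> < 1" by simp
        then have "fst y = 0" by linarith
        then show False using 3 s1 by simp
      qed
      have "cmod (gW S y) \<ge> \<bar>Im (gW S y)\<bar>" by (rule abs_Im_le_cmod)
      then have cW: "cmod (gW S y) \<ge> \<bar>real_of_int (fst y)\<bar>" by (simp add: gW_def)
      have "real_of_int (snd y) \<le> \<bar>real_of_int (fst y)\<bar> powr (1/\<alpha>)" using 3 by simp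
      also have "\<dots> \<le> \<bar>real_of_int (fst y)\<bar> powr \<beta>" using f1 b1 by (intro powr_mono) auto
      also have "\<dots> \<le> cmod (gW S y) powr \<beta>" using cW b0 f1 by (intro powr_mono2) auto
      also have "\<dots> \<le> g y" by (rule glow[OF y0])
      finally have "real_of_int (snd y) \<le> g y" .
      then show ?thesis using rle[of "snd y"] by (simp add: \<Phi>_def)
    qed
  qed
  have step: "Kop Dp \<Phi> x \<ge> \<Phi> x - (1/2) * ch x" if x: "x \<in> Dp" for x
  proof -
    obtain a b where xab: "x = (a,b)" by fastforce
    have xs: "int h < b" "b < 2 * int N" using x by (auto simp: Dp_def xab)
    have nb: "l1 (x + (1,0)) x = 1" "l1 (x + (-1,0)) x = 1" "l1 (x + (0,1)) x = 1" "l1 (x + (0,-1)) x = 1"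
      by (simp_all add: l1_def)
    have i: "ind Dp \<Phi> (x + d) \<ge> \<Phi> (x + d)" if "l1 (x + d) x = 1" for d
      using bdry[OF x _ that] by (auto simp: ind_def)
    have "Kop Dp \<Phi> x \<ge> (\<Phi> (x + (1,0)) + \<Phi> (x + (-1,0)) + \<Phi> (x + (0,1)) + \<Phi> (x + (0,-1))) / 4"
      unfolding Kop_def using i[OF nb(1)] i[OF nb(2)] i[OF nb(3)] i[OF nb(4)] by simp
    moreover have "g (x + (1,0)) + g (x + (-1,0)) + g (x + (0,1)) + g (x + (0,-1)) \<le> 4 * g x"
      unfolding g_def by (rule gf_lap[OF b0 b2 C0 K1]) (use S3 xs in \<open>auto simp: xab\<close>)
    moreover have "\<rho> (b+1) + \<rho> (b-1) \<ge> 2 * \<rho> b - 2 * (if b = int N then 1 else 0)"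
      unfolding \<rho>_def by (rule rho_diff) (use xs in auto)
    moreover have "ch x = (if b = int N then 1 else 0)" by (simp add: ch_def line_def xab)
    ultimately show ?thesis by (simp add: \<Phi>_def xab algebra_simps)
  qed
  have uD: "u \<in> Dp" using hm mN by (auto simp: Dp_def u_def)
  have T: "(Kop Dp ^^ M) \<Phi> u \<ge> \<Phi> u - (1/2) * (\<Sum>n<M. (Kop Dp ^^ n) ch u)" for M
    by (rule tele_ge[OF _ uD]) (use step in auto)
  have \<Phi>u: "\<Phi> u \<ge> 1"
  proof -
    have "\<rho> (int m) = real m" using mN by (simp add: \<rho>_def)
    moreover have "g u \<le> C * (real m + S) powr \<beta>" unfolding g_def u_def
      by (rule gf_upper) (use K0 C0 S3 in auto)
    ultimately show ?thesis using mC by (simp add: \<Phi>_def u_def)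
  qed
  have \<Phi>N: "\<Phi> y \<le> real N * 1 + 0 * 1" if "y \<in> Dp" for y
  proof -
    have "0 \<le> snd y" using that by (auto simp: Dp_def)
    then show ?thesis using gnn[of y] by (simp add: \<Phi>_def \<rho>_def)
  qed
  define L where "L = 2 * N"
  define q :: real where "q = 1 - (1/4)^Suc L"
  have DL: "1 \<le> snd y \<and> snd y \<le> int L" if "y \<in> Dp" for y using that by (auto simp: Dp_def L_def)
  have q1: "q < 1" by (simp add: q_def)
  obtain k where k: "q ^ k < 1 / (2 * (real N + 1))"
    using real_arch_pow_inv[of "1 / (2 * (real N + 1))" q] q1 by auto
  define M where "M = k * Suc L"
  have "(Kop Dp ^^ M) \<Phi> u \<le> (Kop Dp ^^ M) (\<lambda>y. real N * 1 + 0 * 1) u"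
    by (rule Kpow_mono[OF \<Phi>N uD])
  also have "\<dots> = real N * (Kop Dp ^^ M) (\<lambda>_. 1) u + 0" by (subst Kpow_lin) simp
  also have "\<dots> \<le> real N * q ^ k"
    using surv[OF DL uD, of k] unfolding M_def q_def by (simp add: mult_left_mono)
  also have "\<dots> \<le> real N * (1 / (2 * (real N + 1)))" using k by (intro mult_left_mono) auto
  also have "\<dots> \<le> 1/2" by (simp add: field_simps)
  finally have "(Kop Dp ^^ M) \<Phi> u \<le> 1/2" .
  then have "(\<Sum>n<M. (Kop Dp ^^ n) ch u) \<ge> 1" using T[of M] \<Phi>u by linarith
  then show ?thesis unfolding ch_def u_def by blast
qed

theorem lemma1:
  fixes \<alpha> :: real and B :: "(int \<times> int) set"
  assumes "\<alpha> > 1" and "B \<subseteq> UHP" and "B \<noteq> {}" and "finite (Bhat \<alpha> B)"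
  shows "\<exists>c>0. \<exists>N0. \<forall>N\<ge>N0.
    (\<Sum>w\<in>lseg \<alpha> (h0 \<alpha> B). Hbar (B \<union> lseg \<alpha> (h0 \<alpha> B)) N w) \<ge> c"
proof -
  note a1 = assms(1) and fin = assms(4)
  define h where "h = h0 \<alpha> B"
  define \<beta> where "\<beta> = (1 + 1/\<alpha>) / 2"
  have g0: "0 < 1/\<alpha>" "1/\<alpha> < 1" using a1 by auto
  obtain \<gamma> where gd: "\<gamma> = 1/\<alpha>" by blast
  have gg: "0 < \<gamma>" "\<gamma> < 1" using g0 gd by auto
  have bg: "\<beta> = (1 + \<gamma>)/2" using gd by (simp add: \<beta>_def)
  have b1: "1/\<alpha> < \<beta>" using gg unfolding bg gd[symmetric] by (simp add: field_simps)
  have b2: "\<beta> < 1" using gg unfolding bg by (simp add: field_simps)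
  have b0: "0 < \<beta>" using gg unfolding bg by (simp add: field_simps)
  define cb where "cb = cos (\<beta>*pi/2)"
  have p1: "0 < \<beta> * pi" using b0 by simp
  have p2: "\<beta> * pi < pi" using b2 by simp
  have cb0: "0 < cb" unfolding cb_def using p1 p2 by (intro cos_gt_zero_pi) linarith+
  define C where "C = 2 / cb"
  have Ccb: "C * cos (\<beta>*pi/2) = 2" using cb0 by (simp add: C_def cb_def)
  have C0: "0 \<le> C" using cb0 by (simp add: C_def)
  define K where "K = 16 * C"
  define S where "S = K + 3"
  have K0: "0 \<le> K" using C0 by (simp add: K_def)
  obtain m where hm: "h < m" and mC: "C*(real m + S) powr \<beta> + real h + 1 \<le> real m"
    using exists_m[OF b0 b2 C0, of S h] K0 by (auto simp: S_def)
  define j where "j = m - h"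
  define A where "A = B \<union> lseg \<alpha> h"
  define w0 where "w0 = (0::int, int h)"
  have hB: "snd y \<le> int h \<or> real_of_int (snd y) \<le> \<bar>real_of_int (fst y)\<bar> powr (1/\<alpha>)" if "y \<in> B" for y
  proof (cases "y \<in> Bhat \<alpha> B")
    case True
    then have ne: "Bhat \<alpha> B \<noteq> {}" by auto
    have "snd y \<le> Max (snd ` Bhat \<alpha> B)" using True fin by simp
    also have "\<dots> \<le> int (nat (Max (snd ` Bhat \<alpha> B)))" by simp
    also have "nat (Max (snd ` Bhat \<alpha> B)) = h" using ne by (simp add: h_def h0_def)
    finally show ?thesis by simp
  next
    case False then show ?thesis using that by (simp add: Bhat_def)
  qed
  have lsegfin: "finite (lseg \<alpha> h)"
  proof -
    have "lseg \<alpha> h = (\<lambda>i. (i, int h)) ` {- \<lfloor>real h powr \<alpha>\<rfloor> .. \<lfloor>real h powr \<alpha>\<rfloor>}"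
      by (auto simp: lseg_def image_iff abs_le_iff)
    then show ?thesis by simp
  qed
  have w0l: "w0 \<in> lseg \<alpha> h" by (simp add: lseg_def w0_def)
  have lsnd: "snd w = int h" if "w \<in> lseg \<alpha> h" for w using that by (auto simp: lseg_def)
  show ?thesis
  proof (intro exI conjI allI impI)
    show "(0::real) < (1/4)^j" by simp
    fix N assume N: "m + 1 \<le> N"
    have N0: "0 < N" using N by simp
    have hN: "int h \<noteq> int N" using N hm by simp
    define Dp where "Dp = {x. int h < snd x \<and> snd x < 2*int N \<and> \<not> (real_of_int (snd x) \<le> \<bar>real_of_int (fst x)\<bar> powr (1/\<alpha>))}"
    obtain M where M: "(\<Sum>n<M. (Kop Dp ^^ n) (indicator (line (int N))) (0, int m)) \<ge> 1"
    proof -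
      have "16 * C \<le> K" "K \<le> S" "3 \<le> S" "m \<le> N" using N K0 by (auto simp: K_def S_def)
      from core[of \<alpha> \<beta> C K S h m N, OF a1 b1 b2 Ccb C0 this(1,2,3) K0 hm this(4) mC]
      show ?thesis using that unfolding Dp_def by blast
    qed
    define Mt where "Mt = M + j"
    define FM where "FM = (line (int N) - A) \<inter> {z. \<bar>fst z\<bar> \<le> int Mt}"
    define ch :: "pt \<Rightarrow> real" where "ch = indicator (line (int N))"
    have DpA: "Dp \<subseteq> - (A \<union> line 0)"
    proof
      fix x assume x: "x \<in> Dp"
      have "x \<notin> B" using hB[of x] x by (auto simp: Dp_def)
      moreover have "x \<notin> lseg \<alpha> h" using lsnd[of x] x by (auto simp: Dp_def)
      moreover have "x \<notin> line 0" using x by (auto simp: Dp_def line_def)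
      ultimately show "x \<in> - (A \<union> line 0)" by (simp add: A_def)
    qed
    have Hge: "Hbar A N w0 \<ge> (\<Sum>n<Mt. (Kop (-(A \<union> line 0)) ^^ n) (indicator FM) w0)"
      unfolding FM_def by (rule Hbar_ge) (use w0l hN N0 in \<open>auto simp: A_def w0_def\<close>)
    have "(\<Sum>n<Mt. (Kop (-(A \<union> line 0)) ^^ n) (indicator FM) w0) \<ge> (\<Sum>n<Mt. (Kop Dp ^^ n) (indicator FM) w0)"
      by (intro sum_mono Kpow_mono_D DpA) auto
    also have "(\<Sum>n<Mt. (Kop Dp ^^ n) (indicator FM) w0) = (\<Sum>n<Mt. (Kop Dp ^^ n) ch w0)"
    proof (intro sum.cong refl Kpow_local)
      fix n y assume n: "n \<in> {..<Mt}" and y: "y \<in> Dp \<or> y = w0" and d: "l1 w0 y \<le> int n"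
      show "indicator FM y = ch y"
      proof (cases "y = w0")
        case True then show ?thesis using hN by (simp add: FM_def ch_def line_def w0_def indicator_def)
      next
        case False
        then have yD: "y \<in> Dp" using y by simp
        have "y \<notin> A" using yD DpA by auto
        moreover have "\<bar>fst y\<bar> \<le> int Mt" using d n by (auto simp: l1_def w0_def)
        ultimately show ?thesis by (auto simp: FM_def ch_def indicator_def)
      qed
    qed
    also have "(\<Sum>n<Mt. (Kop Dp ^^ n) ch w0) \<ge> (\<Sum>n<M. (Kop Dp ^^ (n + j)) ch w0)"
      unfolding Mt_def by (rule shift_sum_le) (auto intro: Kpow_nonneg_all simp: ch_def)
    also have "(\<Sum>n<M. (Kop Dp ^^ (n + j)) ch w0) \<ge> (\<Sum>n<M. (1/4)^j * (Kop Dp ^^ n) ch (0, int m))"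
    proof (rule sum_mono)
      fix n
      have "(Kop Dp ^^ (n + j)) ch w0 = (Kop Dp ^^ j) ((Kop Dp ^^ n) ch) w0"
        by (simp add: funpow_add add.commute)
      also have "\<dots> \<ge> (1/4)^j * (Kop Dp ^^ n) ch (w0 + (0, int j))"
      proof (rule Kpow_column)
        show "0 \<le> (Kop Dp ^^ n) ch y" for y by (auto intro: Kpow_nonneg_all simp: ch_def)
        fix i assume i: "1 \<le> i" "i \<le> j"
        show "w0 + (0, int i) \<in> Dp" using i hm N by (auto simp: Dp_def w0_def j_def)
      qed
      also have "w0 + (0, int j) = (0, int m)" using hm by (simp add: w0_def j_def)
      finally show "(Kop Dp ^^ (n + j)) ch w0 \<ge> (1/4)^j * (Kop Dp ^^ n) ch (0, int m)" .
    qed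
    also have "(\<Sum>n<M. (1/4)^j * (Kop Dp ^^ n) ch (0, int m)) \<ge> (1/4)^j"
      using M by (simp add: sum_distrib_left[symmetric] ch_def)
    finally have w0b: "Hbar A N w0 \<ge> (1/4)^j" using Hge by linarith
    have nn: "0 \<le> Hbar A N w" if "w \<in> lseg \<alpha> h" for w
      using Hbar_ge[of w A N 0] that lsnd[OF that] hN N0 by (simp add: A_def)
    have "Hbar A N w0 \<le> (\<Sum>w\<in>lseg \<alpha> h. Hbar A N w)"
      by (rule member_le_sum[OF w0l]) (use nn lsegfin in auto)
    then show "(\<Sum>w\<in>lseg \<alpha> (h0 \<alpha> B). Hbar (B \<union> lseg \<alpha> (h0 \<alpha> B)) N w) \<ge> (1/4)^j"
      using w0b by (simp add: A_def h_def)
  qed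
qed

end
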